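(* Let $0<a,b<1$, $f\ge3$, and for a rational function $u$ of $(r,y,z)$ write $u[\mathbf 1]$ for its value at $r=y=z=1$. With $\overline w_{m,n}$, $q^*_\ell$, $w^*_\ell$ as in the context: 1. $\overline w_{f-\ell,f+j}[\mathbf 1]=a^\ell b^{j-1}\big(j+\ell\tfrac ba-(\ell+j-1)b\big)$ for all $1\le\ell\le f$, $j\ge1$; 2. $\overline w_{f+j,f-\ell}[\mathbf 1]=a^{\ell-1}b^{j}\big((j+1)+(\ell-1)\tfrac ba-(\ell+j-1)b\big)$ for all $2\le\ell\le f$, $j\ge0$; 3. $q^*_\ell(a)[\mathbf 1]=\ell a^{\ell-1}$ and $w^*_\ell(a)[\mathbf 1]=a^{\ell-1}(\ell-(\ell-1)a)$ for all $\ell\ge1$.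
   Context: Let $r,y,z$ be indeterminates. For $c\in(0,1)$: $\omega_c:=1-(1-c)^2r^2y^2z^2$, $\tau_c:=1+(1-c)^2r^2z^2y(1-y)$, $x_c:=c^2z^2\tau_c^2$, $\beta_c:=1+z^2(c^2-(1-c)^2r^2(y^2+c^2(1-y)^2z^2))$; $w^*_0(c):=(\beta_c-\omega_c)/x_c$, $w^*_1(c):=1$, $w^*_{n+1}(c):=\beta_cw^*_n(c)-x_cw^*_{n-1}(c)$ ($n\ge1$); $q^*_0(c):=-(1-y)(1+y+(1-c)^2r^2y^2z^2(1-y))/\tau_c^2$, $q^*_1(c):=y^2$, $q^*_{n+1}(c):=\beta_cq^*_n(c)-x_cq^*_{n-1}(c)$ ($n\ge1$). Also $\tau(a,b):=1+(1-a)(1-b)r^2z^2y(1-y)$, $x(a,b):=b^2z^2\tau(a,b)^2$, $x(b,a):=a^2z^2\tau(a,b)^2$, $\beta(a,b):=\beta_b-(b-a)b^2(1-b)r^2(1-y)^2z^4$, $\beta(b,a):=\beta_a-(a-b)a^2(1-a)r^2(1-y)^2z^4$. Define $\overline w_{m,m+1}=\overline w_{m+1,m}:=1$ ($m\ge0$), and for $n-m\ge2$ (indices $\ge0$): upward: $\overline w_{m,m+\ell}:=w^*_\ell(a)$ if $m+\ell\le f$, $:=w^*_\ell(b)$ if $f\le m$; $\overline w_{f-\ell,f+1}:=\frac{1-b}{1-a}w^*_{\ell+1}(a)+\frac{b-a}{1-a}w^*_\ell(a)$ ($1\le\ell\le f$); $\overline w_{m,f+2}:=\beta(a,b)\overline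 w_{m,f+1}-x(a,b)\overline w_{m,f}$ ($m\le f-1$); $\overline w_{m,f+j+1}:=\beta_b\overline w_{m,f+j}-x_b\overline w_{m,f+j-1}$ ($m\le f-1$, $j\ge2$). Downward: $\overline w_{m+\ell,m}:=w^*_\ell(a)$ if $m+\ell\le f-1$, $:=w^*_\ell(b)$ if $f-1\le m$; $\overline w_{f+j,f-2}:=\frac{1-a}{1-b}w^*_{j+2}(b)+\frac{a-b}{1-b}w^*_{j+1}(b)$ ($j\ge0$); $\overline w_{n,f-3}:=\beta(b,a)\overline w_{n,f-2}-x(b,a)\overline w_{n,f-1}$ ($n\ge f$); $\overline w_{n,f-\ell-2}:=\beta_a\overline w_{n,f-\ell-1}-x_a\overline w_{n,f-\ell}$ ($n\ge f$, $\ell\ge2$). *)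

theory Defs
  imports Complex_Main
begin

text \<open>All quantities are real-valued functions of the indeterminates r, y, z
(passed as the first three arguments) and of the parameter c (resp. a, b, f).
Evaluation at r = y = z = 1 is obtained by instantiating r y z with 1.\<close>

definition omegac :: "real \<Rightarrow> real \<Rightarrow> real \<Rightarrow> real \<Rightarrow> real" where
  "omegac r y z c = 1 - (1-c)^2 * r^2 * y^2 * z^2"

definition tauc :: "real \<Rightarrow> real \<Rightarrow> real \<Rightarrow> real \<Rightarrow> real" where
  "tauc r y z c = 1 + (1-c)^2 * r^2 * z^2 * y * (1-y)"

definition xc :: "real \<Rightarrow> real \<Rightarrow> real \<Rightarrow> real \<Rightarrow> real" where
  "xc r y z c = c^2 * z^2 * (tauc r y z c)^2"

definition betac :: "real \<Rightarrow> real \<Rightarrow> real \<Rightarrow> real \<Rightarrow> real" where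
  "betac r y z c = 1 + z^2 * (c^2 - (1-c)^2 * r^2 * (y^2 + c^2 * (1-y)^2 * z^2))"

fun wstar :: "real \<Rightarrow> real \<Rightarrow> real \<Rightarrow> real \<Rightarrow> nat \<Rightarrow> real" where
  "wstar r y z c 0 = (betac r y z c - omegac r y z c) / xc r y z c"
| "wstar r y z c (Suc 0) = 1"
| "wstar r y z c (Suc (Suc n)) =
     betac r y z c * wstar r y z c (Suc n) - xc r y z c * wstar r y z c n"

fun qstar :: "real \<Rightarrow> real \<Rightarrow> real \<Rightarrow> real \<Rightarrow> nat \<Rightarrow> real" where
  "qstar r y z c 0 =
     - (1-y) * (1 + y + (1-c)^2 * r^2 * y^2 * z^2 * (1-y)) / (tauc r y z c)^2"
| "qstar r y z c (Suc 0) = y^2"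
| "qstar r y z c (Suc (Suc n)) =
     betac r y z c * qstar r y z c (Suc n) - xc r y z c * qstar r y z c n"

text \<open>tau(a,b), x(a,b), beta(a,b); the versions x(b,a), beta(b,a) of the paper
are obtained by swapping the arguments (tau is symmetric).\<close>

definition tauab :: "real \<Rightarrow> real \<Rightarrow> real \<Rightarrow> real \<Rightarrow> real \<Rightarrow> real" where
  "tauab r y z a b = 1 + (1-a) * (1-b) * r^2 * z^2 * y * (1-y)"

definition xab :: "real \<Rightarrow> real \<Rightarrow> real \<Rightarrow> real \<Rightarrow> real \<Rightarrow> real" where
  "xab r y z a b = b^2 * z^2 * (tauab r y z a b)^2"

definition betaab :: "real \<Rightarrow> real \<Rightarrow> real \<Rightarrow> real \<Rightarrow> real \<Rightarrow> real" where
  "betaab r y z a b = betac r y z b - (b-a) * b^2 * (1-b) * r^2 * (1-y)^2 * z^4"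

text \<open>Upward part across f: wup r y z a b f m j = wbar_{m,f+j} for m \<le> f-1.\<close>

fun wup :: "real \<Rightarrow> real \<Rightarrow> real \<Rightarrow> real \<Rightarrow> real \<Rightarrow> nat \<Rightarrow> nat \<Rightarrow> nat \<Rightarrow> real" where
  "wup r y z a b f m 0 = wstar r y z a (f - m)"
| "wup r y z a b f m (Suc 0) =
     (1-b)/(1-a) * wstar r y z a (f - m + 1) + (b-a)/(1-a) * wstar r y z a (f - m)"
| "wup r y z a b f m (Suc (Suc 0)) =
     betaab r y z a b * wup r y z a b f m 1 - xab r y z a b * wup r y z a b f m 0"
| "wup r y z a b f m (Suc (Suc (Suc j))) =
     betac r y z b * wup r y z a b f m (Suc (Suc j)) - xc r y z b * wup r y z a b f m (Suc j)"

text \<open>Downward part across f: wdown r y z a b f n i = wbar_{n,f-1-i} for n \<ge> f.\<close>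

fun wdown :: "real \<Rightarrow> real \<Rightarrow> real \<Rightarrow> real \<Rightarrow> real \<Rightarrow> nat \<Rightarrow> nat \<Rightarrow> nat \<Rightarrow> real" where
  "wdown r y z a b f n 0 = wstar r y z b (n - f + 1)"
| "wdown r y z a b f n (Suc 0) =
     (1-a)/(1-b) * wstar r y z b (n - f + 2) + (a-b)/(1-b) * wstar r y z b (n - f + 1)"
| "wdown r y z a b f n (Suc (Suc 0)) =
     betaab r y z b a * wdown r y z a b f n 1 - xab r y z b a * wdown r y z a b f n 0"
| "wdown r y z a b f n (Suc (Suc (Suc i))) =
     betac r y z a * wdown r y z a b f n (Suc (Suc i)) - xc r y z a * wdown r y z a b f n (Suc i)"

text \<open>The full array wbar_{m,n} (value for m = n is irrelevant and set to 0).\<close>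

definition wbar :: "real \<Rightarrow> real \<Rightarrow> real \<Rightarrow> real \<Rightarrow> real \<Rightarrow> nat \<Rightarrow> nat \<Rightarrow> nat \<Rightarrow> real" where
  "wbar r y z a b f m n =
    (if n = m + 1 \<or> m = n + 1 then 1
     else if m + 2 \<le> n then
       (if n \<le> f then wstar r y z a (n - m)
        else if f \<le> m then wstar r y z b (n - m)
        else wup r y z a b f m (n - f))
     else if n + 2 \<le> m then
       (if m \<le> f - 1 then wstar r y z a (m - n)
        else if f - 1 \<le> n then wstar r y z b (m - n)
        else wdown r y z a b f m (f - 1 - n))
     else 0)"

end

theory Submission
  imports Defs
begin

lemma betac1[simp]: "betac 1 1 1 c = 2*c" by (simp add: betac_def power2_eq_square algebra_simps)
lemma xc1[simp]: "xc 1 1 1 c = c^2" by (simp add: xc_def tauc_def)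
lemma omegac1[simp]: "omegac 1 1 1 c = 1 - (1-c)^2" by (simp add: omegac_def)
lemma betaab1[simp]: "betaab 1 1 1 a b = 2*b" by (simp add: betaab_def betac1)
lemma xab1[simp]: "xab 1 1 1 a b = b^2" by (simp add: xab_def tauab_def)

lemma wstar0: "c \<noteq> 0 \<Longrightarrow> wstar 1 1 1 c 0 = 1"
  unfolding wstar.simps betac1 xc1 omegac1 by (simp add: power2_eq_square field_simps)

lemma wstar_aux: "c \<noteq> 0 \<Longrightarrow>
  wstar 1 1 1 c (Suc n) = c^n * (real n + 1 - real n * c) \<and>
  wstar 1 1 1 c (Suc (Suc n)) = c^(Suc n) * (real n + 2 - (real n + 1) * c)"
proof (induction n)
  case 0 then show ?case by (simp add: betac1 xc1 wstar0 power2_eq_square algebra_simps)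
next
  case (Suc n)
  have "wstar 1 1 1 c (Suc (Suc (Suc n))) = 2*c * wstar 1 1 1 c (Suc (Suc n)) - c^2 * wstar 1 1 1 c (Suc n)"
    by (simp only: wstar.simps betac1 xc1)
  then show ?case using Suc
    by (simp add: power2_eq_square algebra_simps del: wstar.simps qstar.simps)
qed

lemma qstar_aux:
  "qstar 1 1 1 c (Suc n) = real (Suc n) * c^n \<and>
   qstar 1 1 1 c (Suc (Suc n)) = real (Suc (Suc n)) * c^(Suc n)"
proof (induction n)
  case 0 then show ?case by (simp add: betac1 xc1)
next
  case (Suc n)
  have "qstar 1 1 1 c (Suc (Suc (Suc n))) = 2*c * qstar 1 1 1 c (Suc (Suc n)) - c^2 * qstar 1 1 1 c (Suc n)"
    by (simp only: qstar.simps betac1 xc1)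
  then show ?case using Suc
    by (simp add: power2_eq_square algebra_simps del: wstar.simps qstar.simps)
qed

lemma wup_aux:
  assumes "a \<noteq> 0" "a \<noteq> 1" "b \<noteq> 0"
  shows "wup 1 1 1 a b f m (Suc j) = a^(f-m) * b^j * (real j + 1 + real (f-m) * (b/a) - real (f-m+j) * b) \<and>
    wup 1 1 1 a b f m (Suc (Suc j)) = a^(f-m) * b^(Suc j) * (real j + 2 + real (f-m) * (b/a) - real (f-m+j+1) * b)"
proof (induction j)
  case 0
  obtain l where l: "f - m = l" by blast
  have h1: "wup 1 1 1 a b f m (Suc 0) = a^l * (1 + real l * (b/a) - real l * b)"
  proof (cases l)
    case 0
    then show ?thesis using assms l wstar_aux[of a 0] wstar0[of a]
      by (simp add: divide_simps)
  next
    case (Suc k)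
    have e1: "wstar 1 1 1 a (f - m + 1) = a^(Suc k) * (real k + 2 - (real k + 1) * a)"
      using wstar_aux[of a k] assms l Suc by (simp del: wstar.simps)
    have e2: "wstar 1 1 1 a (f - m) = a^k * (real k + 1 - real k * a)"
      using wstar_aux[of a k] assms l Suc by (simp del: wstar.simps)
    have "1 - a \<noteq> 0" using assms by simp
    have "wup 1 1 1 a b f m (Suc 0) = (1-b)/(1-a) * (a^(Suc k) * (real k + 2 - (real k + 1) * a))
       + (b-a)/(1-a) * (a^k * (real k + 1 - real k * a))"
      by (simp only: wup.simps e1 e2)
    also have "\<dots> = ((1-b) * (a^(Suc k) * (real k + 2 - (real k + 1) * a))
       + (b-a) * (a^k * (real k + 1 - real k * a))) / (1-a)"
      by (simp add: add_divide_distrib)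
    also have "(1-b) * (a^(Suc k) * (real k + 2 - (real k + 1) * a))
       + (b-a) * (a^k * (real k + 1 - real k * a)) = (1-a) * (a^l * (1 + real l * (b/a) - real l * b))"
      using Suc assms by (simp add: field_simps)
    finally show ?thesis using \<open>1 - a \<noteq> 0\<close> by simp
  qed
  have h0: "wup 1 1 1 a b f m 0 = a^l * (1 + real l * (b/a) - real l * b - (1 - b) ) / b"
  proof (cases l)
    case 0
    then show ?thesis using assms l wstar0[of a] by (simp add: field_simps)
  next
    case (Suc k)
    have hw: "wup 1 1 1 a b f m 0 = a^k * (real k + 1 - real k * a)"
      using wstar_aux[of a k] assms l Suc by (simp del: wstar.simps)
    show ?thesis unfolding hw using assms Suc by (simp add: field_simps)
  qed
  have h2: "wup 1 1 1 a b f m (Suc (Suc 0)) = 2*b * wup 1 1 1 a b f m (Suc 0) - b^2 * wup 1 1 1 a b f m 0"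
    by (simp only: wup.simps betaab1 xab1 One_nat_def)
  show ?case unfolding h2 h0 h1 l using assms by (simp add: power2_eq_square field_simps)
next
  case (Suc j)
  have h3: "wup 1 1 1 a b f m (Suc (Suc (Suc j))) = 2*b * wup 1 1 1 a b f m (Suc (Suc j)) - b^2 * wup 1 1 1 a b f m (Suc j)"
    by (simp only: wup.simps betac1 xc1)
  from Suc.IH have E1: "wup 1 1 1 a b f m (Suc j) = a^(f-m) * b^j * (real j + 1 + real (f-m) * (b/a) - real (f-m+j) * b)"
    and E2: "wup 1 1 1 a b f m (Suc (Suc j)) = a^(f-m) * b^(Suc j) * (real j + 2 + real (f-m) * (b/a) - real (f-m+j+1) * b)"
    by auto
  show ?case unfolding h3 E1 E2 using assms
    by (simp add: power2_eq_square field_simps)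
qed


lemma wdown_aux:
  assumes "a \<noteq> 0" "b \<noteq> 1" "b \<noteq> 0"
  shows "wdown 1 1 1 a b f n i = a^i * b^(n-f) * (real (n-f) + 1 + real i * (b/a) - real (i+(n-f)) * b) \<and>
    wdown 1 1 1 a b f n (Suc i) = a^(Suc i) * b^(n-f) * (real (n-f) + 1 + real (Suc i) * (b/a) - real (Suc i+(n-f)) * b)"
proof (induction i)
  case 0
  obtain k where k: "n - f = k" by blast
  have e1: "wstar 1 1 1 b (n - f + 2) = b^(Suc k) * (real k + 2 - (real k + 1) * b)"
    using wstar_aux[of b k] assms k by (simp del: wstar.simps)
  have e2: "wstar 1 1 1 b (n - f + 1) = b^k * (real k + 1 - real k * b)"
    using wstar_aux[of b k] assms k by (simp del: wstar.simps)
  have "1 - b \<noteq> 0" using assms by simp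
  have "wdown 1 1 1 a b f n (Suc 0) = (1-a)/(1-b) * (b^(Suc k) * (real k + 2 - (real k + 1) * b))
       + (a-b)/(1-b) * (b^k * (real k + 1 - real k * b))"
    by (simp only: wdown.simps e1 e2)
  also have "\<dots> = ((1-a) * (b^(Suc k) * (real k + 2 - (real k + 1) * b))
       + (a-b) * (b^k * (real k + 1 - real k * b))) / (1-b)"
    by (simp add: add_divide_distrib)
  also have "(1-a) * (b^(Suc k) * (real k + 2 - (real k + 1) * b))
       + (a-b) * (b^k * (real k + 1 - real k * b)) = (1-b) * (a * b^k * (real k + 1 + (b/a) - real (Suc k) * b))"
    using assms by (simp add: field_simps)
  finally have h1: "wdown 1 1 1 a b f n (Suc 0) = a * b^k * (real k + 1 + (b/a) - real (Suc k) * b)"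
    using \<open>1 - b \<noteq> 0\<close> by simp
  have h0: "wdown 1 1 1 a b f n 0 = b^k * (real k + 1 - real k * b)"
    using e2 by simp
  show ?case unfolding k h0 h1 using assms by (simp add: field_simps)
next
  case (Suc i)
  have h3: "wdown 1 1 1 a b f n (Suc (Suc i)) = 2*a * wdown 1 1 1 a b f n (Suc i) - a^2 * wdown 1 1 1 a b f n i"
  proof (cases i)
    case 0 then show ?thesis by (simp only: wdown.simps betaab1 xab1 One_nat_def)
  next
    case (Suc i') then show ?thesis by (simp only: wdown.simps betac1 xc1)
  qed
  from Suc.IH have E1: "wdown 1 1 1 a b f n i = a^i * b^(n-f) * (real (n-f) + 1 + real i * (b/a) - real (i+(n-f)) * b)"
    and E2: "wdown 1 1 1 a b f n (Suc i) = a^(Suc i) * b^(n-f) * (real (n-f) + 1 + real (Suc i) * (b/a) - real (Suc i+(n-f)) * b)"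
    by auto
  show ?case unfolding h3 E1 E2 using assms
    by (simp add: power2_eq_square field_simps)
qed


theorem lemma3:
  fixes a b :: real and f :: nat
  assumes "0 < a" "a < 1" "0 < b" "b < 1" "3 \<le> f"
  shows "(\<forall>l j. 1 \<le> l \<and> l \<le> f \<and> 1 \<le> j \<longrightarrow>
            wbar 1 1 1 a b f (f - l) (f + j)
              = a ^ l * b ^ (j - 1) * (real j + real l * (b / a) - real (l + j - 1) * b))
       \<and> (\<forall>l j. 2 \<le> l \<and> l \<le> f \<longrightarrow>
            wbar 1 1 1 a b f (f + j) (f - l)
              = a ^ (l - 1) * b ^ j * (real (j + 1) + real (l - 1) * (b / a) - real (l + j - 1) * b))
       \<and> (\<forall>l. 1 \<le> l \<longrightarrow>
            qstar 1 1 1 a l = real l * a ^ (l - 1)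
            \<and> wstar 1 1 1 a l = a ^ (l - 1) * (real l - real (l - 1) * a))"
proof (intro conjI allI impI)
  have a0: "a \<noteq> 0" "a \<noteq> 1" "b \<noteq> 0" "b \<noteq> 1" using assms by auto
  fix l j :: nat
  assume h: "1 \<le> l \<and> l \<le> f \<and> 1 \<le> j"
  then obtain j' where j': "j = Suc j'" by (cases j) auto
  have w: "wbar 1 1 1 a b f (f - l) (f + j) = wup 1 1 1 a b f (f - l) j"
    using h unfolding wbar_def by auto
  have fl: "f - (f - l) = l" using h by auto
  show "wbar 1 1 1 a b f (f - l) (f + j)
              = a ^ l * b ^ (j - 1) * (real j + real l * (b / a) - real (l + j - 1) * b)"
    unfolding w unfolding j' using conjunct1[OF wup_aux[OF a0(1,2,3), of f "f-l" j']] unfolding fl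
    by (simp add: algebra_simps)
next
  have a0: "a \<noteq> 0" "a \<noteq> 1" "b \<noteq> 0" "b \<noteq> 1" using assms by auto
  fix l j :: nat
  assume h: "2 \<le> l \<and> l \<le> f"
  have w: "wbar 1 1 1 a b f (f + j) (f - l) = wdown 1 1 1 a b f (f + j) (l - 1)"
    using h unfolding wbar_def by auto
  have e: "f - 1 - (f - l) = l - 1" using h by auto
  have l1: "real (l - 1) + real j = real (l + j - 1)" using h by auto
  show "wbar 1 1 1 a b f (f + j) (f - l)
              = a ^ (l - 1) * b ^ j * (real (j + 1) + real (l - 1) * (b / a) - real (l + j - 1) * b)"
  proof -
    obtain k where k: "l = Suc k" using h by (cases l) auto
    show ?thesis
      unfolding w unfolding k using conjunct1[OF wdown_aux[OF a0(1,4,3), of f "f+j" "k"]]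
      by (simp add: algebra_simps)
  qed
next
  fix l :: nat assume "1 \<le> l"
  then obtain n where n: "l = Suc n" by (cases l) auto
  show "qstar 1 1 1 a l = real l * a ^ (l - 1)" using qstar_aux[of a n] n by (simp del: qstar.simps)
next
  fix l :: nat assume "1 \<le> l"
  then obtain n where n: "l = Suc n" by (cases l) auto
  have "a \<noteq> 0" using assms by auto
  then show "wstar 1 1 1 a l = a ^ (l - 1) * (real l - real (l - 1) * a)"
    using wstar_aux[of a n] n by (simp del: wstar.simps)
qed

end
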